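(* Let $a(t)=t^\alpha$ with $\alpha>0$, $\alpha\ne1$, and consider the two-dimensional Robertson–Walker spacetime $ds^2=-dt^2+a^2(t)\,d\chi^2$ with comoving worldlines $\beta_0:\chi=0$, $\beta_1:\chi=\chi_1$, $\beta_2:\chi=\chi_2$, where $\chi_2>\chi_1>0$. Fix $\tau_0>0$; suppose the spacelike geodesic orthogonal to $\beta_0$ at $(\tau_0,0)$ meets $\beta_1$ at $(\tau_1,\chi_1)$ and $\beta_2$, and the spacelike geodesic orthogonal to $\beta_1$ at $(\tau_1,\chi_1)$ meets $\beta_2$. Let $v_{\mathrm{kin}1}$ be the kinematic velocity of $\beta_1$ relative to $\beta_0$ at proper time $\tau_0$, $v_{\mathrm{kin}3}$ that of $\beta_2$ relative to $\beta_0$ at proper time $\tau_0$, and $v_{\mathrm{kin}2}$ that of $\beta_2$ relative to $\beta_1$ at proper time $\tau_1$. Then $$v_{\mathrm{kin}3}=\sqrt{1-G_\alpha^{2\alpha}\!\left(f^{-1}(v_{\mathrm{kin}1})+(1-v_{\mathrm{kin}1}^2)^{\frac{1-\alpha}{2\alpha}}f^{-1}(v_{\mathrm{kin}2})\right)},$$ where $f^{-1}(w)=\frac{\alpha}{\alpha-1}\left[F_\alpha\!\left(\sqrt{1-w^2}\right)-C_\alpha\right]$.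
   Context: Comoving worldlines $\chi=\text{const}$ are parametrized by $t$, their proper time. The kinematic velocity of a comoving particle at coordinate $\chi$ relative to a comoving observer $\beta_j$ ($\chi=\chi_j$) at proper time $\tau$: parallel transport the particle's 4-velocity along the spacelike geodesic orthogonal to $\beta_j$ at $(\tau,\chi_j)$ (from the event $(t,\chi)$ where it meets the particle) to $(\tau,\chi_j)$, write it as $\gamma(u+V)$ with $u=\partial_t$, $V\perp u$, $V=v_{\mathrm{kin}}a(\tau)^{-1}\partial_\chi$; it is known that $v_{\mathrm{kin}}=\mathrm{sgn}(\chi-\chi_j)\sqrt{1-a^2(t)/a^2(\tau)}$. Define $C_\alpha=\sqrt{\pi}\,\Gamma\!\left(\frac{1+\alpha}{2\alpha}\right)/\Gamma\!\left(\frac{1}{2\alpha}\right)$, $F_\alpha(z)=z^{\frac{1-\alpha}{\alpha}}\,{}_2F_1\!\left(\tfrac12,\tfrac{1-\alpha}{2\alpha};\tfrac{1+\alpha}{2\alpha};z^2\right)$ for $0<z<1$ (${}_2F_1$ the Gauss hypergeometric function), and $G_\alpha(v)=\left(F_\alpha^{-1}\!\left(C_\alpha+\frac{\alpha-1}{\alpha}v\right)\right)^{1/\alpha}$. It is known that for a comoving particle with $\chi>\chi_j$, $v_{\mathrm{kin}}=f(v)=\sqrt{1-G_\alpha^{2\alpha}(v)}$, where $v=\dot a(\tau)(\chi-\chi_j)$ is the Hubble velocity, and $f^{-1}$ is as given in the claim. *)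

theory Defs
  imports "HOL-Analysis.Analysis"
begin

definition scale :: "real \<Rightarrow> real \<Rightarrow> real" where
  "scale \<alpha> t = t powr \<alpha>"

definition scale' :: "real \<Rightarrow> real \<Rightarrow> real" where
  "scale' \<alpha> t = \<alpha> * t powr (\<alpha> - 1)"

text \<open>An affinely parametrised geodesic (T s, X s), s in the interval I, of the metric
  -dt^2 + a(t)^2 dchi^2, starting at (tau, chi_j) orthogonally to the comoving worldline
  chi = chi_j (i.e. T'(0) = 0, X'(0) nonzero: spacelike and orthogonal to d/dt).\<close>

definition orth_geodesic ::
  "real \<Rightarrow> real \<Rightarrow> real \<Rightarrow> (real \<Rightarrow> real) \<Rightarrow> (real \<Rightarrow> real) \<Rightarrow> real set \<Rightarrow> bool" where
  "orth_geodesic \<alpha> \<tau> cj T X I \<longleftrightarrow>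
     is_interval I \<and> 0 \<in> I \<and> T 0 = \<tau> \<and> X 0 = cj \<and> (\<forall>s\<in>I. 0 < T s) \<and>
     (\<exists>T' X'.
        T' 0 = 0 \<and> X' 0 \<noteq> 0 \<and>
        (\<forall>s\<in>I.
           (T has_real_derivative T' s) (at s within I) \<and>
           (X has_real_derivative X' s) (at s within I) \<and>
           (T' has_real_derivative
              (- scale \<alpha> (T s) * scale' \<alpha> (T s) * (X' s)\<^sup>2)) (at s within I) \<and>
           (X' has_real_derivative
              (- 2 * (scale' \<alpha> (T s) / scale \<alpha> (T s)) * T' s * X' s)) (at s within I)))"

text \<open>Kinematic velocity of the comoving particle at chi (met at time t by the geodesic
  orthogonal to beta_j at (tau, chi_j)) relative to beta_j at proper time tau; we use the
  known closed form given in the context.\<close>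

definition kin_vel :: "real \<Rightarrow> real \<Rightarrow> real \<Rightarrow> real \<Rightarrow> real \<Rightarrow> real" where
  "kin_vel \<alpha> \<tau> cj t c = sgn (c - cj) * sqrt (1 - (scale \<alpha> t)\<^sup>2 / (scale \<alpha> \<tau>)\<^sup>2)"

definition hyp2F1 :: "real \<Rightarrow> real \<Rightarrow> real \<Rightarrow> real \<Rightarrow> real" where
  "hyp2F1 a b c z =
     (\<Sum>n. pochhammer a n * pochhammer b n / (pochhammer c n * fact n) * z ^ n)"

definition C_const :: "real \<Rightarrow> real" where
  "C_const \<alpha> = sqrt pi * Gamma ((1 + \<alpha>) / (2 * \<alpha>)) / Gamma (1 / (2 * \<alpha>))"

definition F_fun :: "real \<Rightarrow> real \<Rightarrow> real" where
  "F_fun \<alpha> z = z powr ((1 - \<alpha>) / \<alpha>) *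
     hyp2F1 (1/2) ((1 - \<alpha>) / (2 * \<alpha>)) ((1 + \<alpha>) / (2 * \<alpha>)) (z\<^sup>2)"

definition G_fun :: "real \<Rightarrow> real \<Rightarrow> real" where
  "G_fun \<alpha> v = (inv_into {0<..<1} (F_fun \<alpha>) (C_const \<alpha> + (\<alpha> - 1) / \<alpha> * v)) powr (1 / \<alpha>)"

definition f_inv :: "real \<Rightarrow> real \<Rightarrow> real" where
  "f_inv \<alpha> w = \<alpha> / (\<alpha> - 1) * (F_fun \<alpha> (sqrt (1 - w\<^sup>2)) - C_const \<alpha>)"

end

theory Submission
  imports Defs
begin

definition cc :: "nat \<Rightarrow> real" where "cc n = pochhammer (1/2) n / fact n"
definition dd :: "real \<Rightarrow> nat \<Rightarrow> real" where "dd b n = cc n * (b / (b + real n))"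
definition HH :: "real \<Rightarrow> real \<Rightarrow> real" where "HH b x = (\<Sum>n. dd b n * x ^ n)"
definition GG :: "real \<Rightarrow> real \<Rightarrow> real" where "GG b x = x powr b * HH b x"

lemma cc_0 [simp]: "cc 0 = 1" by (simp add: cc_def)
lemma cc_Suc: "cc (Suc n) = cc n * ((real n + 1/2) / (real n + 1))"
  by (simp add: cc_def pochhammer_rec' field_simps)
lemma cc_pos: "0 < cc n"
  by (induction n) (auto simp: cc_Suc)
lemma cc_sq: "(cc n)^2 * (2 * real n + 1) \<le> 1"
proof (induction n)
  case 0 then show ?case by simp
next
  case (Suc n)
  have "(cc (Suc n))^2 * (2 * real (Suc n) + 1)
        = (cc n)^2 * (2 * real n + 1) * ((2*real n+1)*(2*real n+3) / (4*(real n+1)^2))"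
    by (simp add: cc_Suc power2_eq_square field_simps)
  also have "\<dots> \<le> 1 * 1"
  proof (rule mult_mono)
    show "(2*real n+1)*(2*real n+3) / (4*(real n+1)^2) \<le> 1"
    proof -
      have "0 < 4*(real n+1)^2" by simp
      moreover have "(2*real n+1)*(2*real n+3) \<le> 4*(real n+1)^2" by (simp add: power2_eq_square algebra_simps)
      ultimately show ?thesis by simp
    qed
  qed (use Suc in \<open>auto intro!: divide_nonneg_pos\<close>)
  finally show ?case by simp
qed

lemma cc_le1: "cc n \<le> 1"
proof -
  have "(cc n)^2 \<le> 1" using cc_sq[of n] cc_pos[of n]
  proof -
    have "(cc n)^2 * 1 \<le> (cc n)^2 * (2 * real n + 1)" by (intro mult_left_mono) auto
    then show ?thesis using cc_sq[of n] by linarith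
  qed
  then show ?thesis using power2_le_imp_le[of "cc n" 1] by simp
qed

lemma dd_bound:
  assumes b: "b > -1/2" and n: "n \<ge> 1"
  shows "norm (dd b n) \<le> 2 * \<bar>b\<bar> * real n powr (-3/2)"
proof -
  have npos: "real n > 0" using n by simp
  have bn: "b + real n \<ge> real n / 2" using b n by simp
  have c0: "(cc n)^2 * real n \<le> 1"
  proof -
    have "(cc n)^2 * real n \<le> (cc n)^2 * (2 * real n + 1)"
      by (intro mult_left_mono) auto
    then show ?thesis using cc_sq[of n] by linarith
  qed
  have c1: "(cc n)^2 \<le> 1 / real n"
    using c0 npos by (simp add: le_divide_eq)
  have c2: "cc n \<le> real n powr (-1/2)"
  proof -
    have "cc n = sqrt ((cc n)^2)" using cc_pos[of n] by simp
    also have "\<dots> \<le> sqrt (1 / real n)" using c1 by (rule real_sqrt_le_mono)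
    also have "\<dots> = 1 / sqrt (real n)" by (simp add: real_sqrt_divide)
    also have "sqrt (real n) = real n powr (1/2)" by (simp add: powr_half_sqrt)
    also have "1 / real n powr (1/2) = real n powr (-(1/2))"
      unfolding powr_minus[of "real n" "1/2"] by (rule inverse_eq_divide[symmetric])
    finally show ?thesis by (simp only: minus_divide_left)
  qed
  define p where "p = real n powr (-1/2)"
  have p0: "p \<ge> 0" unfolding p_def by simp
  have "norm (dd b n) = cc n * (\<bar>b\<bar> / (b + real n))"
    using cc_pos[of n] bn npos unfolding dd_def norm_mult real_norm_def abs_divide
    by (simp add: abs_mult)
  also have "\<dots> \<le> p * (\<bar>b\<bar> / (real n / 2))"
  proof (rule mult_mono)
    show "\<bar>b\<bar> / (b + real n) \<le> \<bar>b\<bar> / (real n / 2)"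
      by (rule divide_left_mono) (use bn npos in auto)
  qed (use c2 p0 cc_pos[of n] npos bn in \<open>auto simp: p_def\<close>)
  also have "\<dots> = 2 * \<bar>b\<bar> * (p / real n)" using npos by (simp add: field_simps)
  also have "p / real n = real n powr (-3/2)"
  proof -
    have "real n powr (-3/2) = real n powr (-1/2 - 1)" by simp
    also have "\<dots> = real n powr (-1/2) / real n powr 1" by (rule powr_diff)
    finally show ?thesis using npos unfolding p_def by simp
  qed
  finally show ?thesis .
qed

lemma dd_summable: assumes "b > -1/2" shows "summable (\<lambda>n. norm (dd b n))"
proof (rule summable_comparison_test'[where N=1])
  show "summable (\<lambda>n. 2 * \<bar>b\<bar> * real n powr (-3/2))"
    by (intro summable_mult) (simp add: summable_real_powr_iff)
  fix n :: nat assume "1 \<le> n" then show "norm (norm (dd b n)) \<le> 2 * \<bar>b\<bar> * real n powr (-3/2)"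
    using dd_bound[OF assms] by simp
qed


lemma poch_ratio:
  assumes "b > -1/2" "b \<noteq> 0"
  shows "pochhammer b n / pochhammer (b+1) n = b / (b + real n)"
proof -
  have e: "b * pochhammer (b+1) n = (b + real n) * pochhammer b n"
    using pochhammer_rec[of b n] pochhammer_rec'[of b n] by simp
  have p: "pochhammer (b+1) n > 0" using assms by (intro pochhammer_pos) simp
  have q: "b + real n \<noteq> 0" using assms by (cases n) auto
  show ?thesis using e p q by (simp add: field_simps)
qed

lemma hyp_eq:
  assumes "b > -1/2" "b \<noteq> 0"
  shows "hyp2F1 (1/2) b (b+1) x = HH b x"
  unfolding hyp2F1_def HH_def
proof (rule suminf_cong)
  fix n
  have "pochhammer (1/2) n * pochhammer b n / (pochhammer (b + 1) n * fact n)
        = (pochhammer (1/2) n / fact n) * (pochhammer b n / pochhammer (b+1) n)"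
    by simp
  also have "\<dots> = dd b n" using poch_ratio[OF assms] by (simp add: dd_def cc_def)
  finally show "pochhammer (1/2) n * pochhammer b n / (pochhammer (b + 1) n * fact n) * x ^ n
        = dd b n * x ^ n" by simp
qed

lemma HH_summable:
  assumes "b > -1/2" "\<bar>x\<bar> \<le> 1"
  shows "summable (\<lambda>n. dd b n * x ^ n)"
proof (rule summable_comparison_test'[where N=0])
  show "summable (\<lambda>n. norm (dd b n))" using dd_summable[OF assms(1)] .
  fix n :: nat
  have "\<bar>x\<bar>^n \<le> 1" using assms(2) by (simp add: power_le_one)
  then show "norm (dd b n * x ^ n) \<le> norm (dd b n)"
    by (simp add: abs_mult power_abs mult_left_le)
qed

lemma HH_sums:
  assumes "b > -1/2" "\<bar>x\<bar> \<le> 1"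
  shows "(\<lambda>n. dd b n * x ^ n) sums HH b x"
  unfolding HH_def using HH_summable[OF assms] by (rule summable_sums)

lemma HH_cont:
  assumes "b > -1/2"
  shows "continuous_on {-1..1} (HH b)"
proof (rule uniform_limit_theorem)
  show "\<forall>\<^sub>F n in sequentially. continuous_on {-1..1} (\<lambda>x. \<Sum>i<n. dd b i * x ^ i)"
    by (intro always_eventually allI continuous_intros)
  show "uniform_limit {-1..1} (\<lambda>n x. \<Sum>i<n. dd b i * x ^ i) (HH b) sequentially"
    unfolding HH_def
  proof (rule Weierstrass_m_test)
    fix n and x :: real assume "x \<in> {-1..1}"
    then have "\<bar>x\<bar>^n \<le> 1" by (intro power_le_one) auto
    then show "norm (dd b n * x ^ n) \<le> norm (dd b n)"
      by (simp add: abs_mult power_abs mult_left_le)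
  qed (rule dd_summable[OF assms])
qed simp

lemma cc_sums:
  assumes "\<bar>x\<bar> < 1"
  shows "(\<lambda>n. cc n * x ^ n) sums (1 - x) powr (-1/2)"
proof -
  have "(\<lambda>n. ((-1/2) gchoose n) * (-x)^n) sums (1 + (-x)) powr (-1/2)"
    using assms by (intro gen_binomial_real) simp
  moreover have "((-1/2::real) gchoose n) * (-x)^n = cc n * x ^ n" for n
  proof -
    have "((-1/2::real) gchoose n) * (-x)^n = ((-1)^n * (-1)^n) * (pochhammer (1/2) n / fact n) * x^n"
      by (simp add: gbinomial_pochhammer power_minus[of x] )
    also have "(-1::real)^n * (-1)^n = 1" by (simp add: power_mult_distrib[symmetric])
    finally show ?thesis by (simp add: cc_def)
  qed
  ultimately show ?thesis by simp
qed

lemma HH_deriv: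
  assumes b: "b > -1/2" "b \<noteq> 0" and x: "\<bar>x\<bar> < 1"
  shows "\<exists>D. (HH b has_real_derivative D) (at x) \<and> b * HH b x + x * D = b * (1 - x) powr (-1/2)"
proof -
  define D where "D = (\<Sum>n. diffs (dd b) n * x^n)"
  have der: "(HH b has_real_derivative D) (at x)"
    unfolding HH_def D_def
    by (rule termdiffs_strong[where K=1]) (use HH_summable[OF b(1), of 1] x in auto)
  have sD: "(\<lambda>n. diffs (dd b) n * x^n) sums D"
    unfolding D_def
    by (rule summable_sums, rule termdiff_converges[where K=1])
       (use x HH_summable[OF b(1)] in auto)
  define f where "f n = real n * dd b n * x ^ n" for n
  have "(\<lambda>n. x * (diffs (dd b) n * x^n)) sums (x * D)" using sums_mult[OF sD] .
  moreover have "x * (diffs (dd b) n * x^n) = f (Suc n)" for n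
    by (simp add: f_def diffs_def)
  ultimately have "(\<lambda>n. f (Suc n)) sums (x * D)" by simp
  then have "f sums (x * D + f 0)" by (rule sums_Suc_iff[THEN iffD1])
  then have s1: "f sums (x * D)" by (simp add: f_def)
  have s2: "(\<lambda>n. b * (dd b n * x ^ n)) sums (b * HH b x)"
    using sums_mult[OF HH_sums[OF b(1)]] x by simp
  have "(\<lambda>n. b * (dd b n * x ^ n) + f n) sums (b * HH b x + x * D)"
    by (rule sums_add[OF s2 s1])
  moreover have "b * (dd b n * x ^ n) + f n = b * (cc n * x ^ n)" for n
  proof -
    have nz: "b + real n \<noteq> 0" using b by (cases n) auto
    have "b * (dd b n * x ^ n) + f n = ((b + real n) * dd b n) * x^n" by (simp add: f_def algebra_simps)
    also have "(b + real n) * dd b n = b * cc n" using nz unfolding dd_def by simp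
    finally show ?thesis by simp
  qed
  ultimately have "(\<lambda>n. b * (cc n * x ^ n)) sums (b * HH b x + x * D)" by simp
  moreover have "(\<lambda>n. b * (cc n * x ^ n)) sums (b * (1 - x) powr (-1/2))"
    by (rule sums_mult[OF cc_sums[OF x]])
  ultimately have "b * HH b x + x * D = b * (1 - x) powr (-1/2)" using sums_unique2 by blast
  with der show ?thesis by blast
qed

lemma GG_deriv:
  assumes b: "b > -1/2" "b \<noteq> 0" and x: "0 < x" "x < 1"
  shows "(GG b has_real_derivative b * x powr (b-1) * (1 - x) powr (-1/2)) (at x)"
proof -
  obtain D where D: "(HH b has_real_derivative D) (at x)"
    and e: "b * HH b x + x * D = b * (1 - x) powr (-1/2)"
    using HH_deriv[OF b, of x] x by auto
  have "(GG b has_real_derivative (b * x powr (b-1) * HH b x + D * x powr b)) (at x)"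
    unfolding GG_def[abs_def]
    by (rule DERIV_mult[OF has_real_derivative_powr[OF x(1)] D])
  moreover have "b * x powr (b-1) * HH b x + D * x powr b = x powr (b-1) * (b * HH b x + x * D)"
  proof -
    have "x powr b = x powr (b-1) * x" using x by (simp add: powr_diff)
    then show ?thesis by (simp add: algebra_simps)
  qed
  ultimately show ?thesis using e by (simp add: mult_ac)
qed


definition MM :: "real \<Rightarrow> real \<Rightarrow> real" where
  "MM b t = GG b t - t powr b * sqrt (1 - t)"

lemma MM_deriv:
  assumes b: "b > -1/2" "b \<noteq> 0" and t: "0 < t" "t < 1"
  shows "(MM b has_real_derivative (b + 1/2) * (t powr b * (1 - t) powr (-1/2))) (at t)"
proof -
  have d1: "(GG b has_real_derivative b * t powr (b-1) * (1 - t) powr (-1/2)) (at t)"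
    by (rule GG_deriv[OF b t])
  have d2: "((\<lambda>t. t powr b * sqrt (1 - t)) has_real_derivative
      (b * t powr (b-1) * sqrt (1 - t) + t powr b * (- (inverse (sqrt (1 - t)) / 2)))) (at t)"
    using t by (auto intro!: derivative_eq_intros)
  define s where "s = sqrt (1 - t)"
  have s0: "s > 0" using t by (simp add: s_def)
  have s2: "s^2 = 1 - t" using t by (simp add: s_def)
  have pw: "(1 - t) powr (-1/2) = 1 / s"
  proof -
    have "(1 - t) powr (-1/2) = inverse ((1 - t) powr (1/2))"
      using powr_minus[of "1-t" "1/2"] by simp
    also have "(1 - t) powr (1/2) = s" using t by (simp add: s_def powr_half_sqrt)
    finally show ?thesis by (simp add: inverse_eq_divide)
  qed
  have tb: "t powr (b-1) = t powr b / t" using t by (simp add: powr_diff)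
  have "(MM b has_real_derivative (b * t powr (b-1) * (1 - t) powr (-1/2) -
      (b * t powr (b-1) * sqrt (1 - t) + t powr b * (- (inverse (sqrt (1 - t)) / 2))))) (at t)"
    unfolding MM_def[abs_def] by (rule DERIV_diff[OF d1 d2])
  moreover have "b * t powr (b-1) * (1 - t) powr (-1/2) -
      (b * t powr (b-1) * sqrt (1 - t) + t powr b * (- (inverse (sqrt (1 - t)) / 2)))
      = (b + 1/2) * (t powr b * (1 - t) powr (-1/2))"
  proof -
    have "b * t powr (b-1) * (1 - t) powr (-1/2) -
      (b * t powr (b-1) * sqrt (1 - t) + t powr b * (- (inverse (sqrt (1 - t)) / 2)))
      = t powr b * ((b - b * s^2) / (t * s) + 1 / (2 * s))"
      unfolding pw tb s_def[symmetric] using s0 t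
      by (simp add: field_simps power2_eq_square)
    also have "(b - b * s^2) / (t * s) = b / s"
    proof -
      have "b - b * s^2 = b * (1 - s^2)" by (simp add: algebra_simps)
      also have "1 - s^2 = t" using s2 by simp
      finally have "b - b * s^2 = b * t" .
      then show ?thesis using t s0 by simp
    qed
    also have "t powr b * (b / s + 1 / (2 * s)) = (b + 1/2) * (t powr b * (1/s))"
      using s0 by (simp add: field_simps)
    finally show ?thesis unfolding pw .
  qed
  ultimately show ?thesis by simp
qed

lemma HH_minus1_bound:
  assumes b: "b > -1/2" "b \<noteq> 0" and t: "0 \<le> t" "t \<le> 1"
  shows "\<bar>HH b t - 1\<bar> \<le> t * (\<Sum>n. norm (dd b (Suc n)))"
proof -
  have sumN: "summable (\<lambda>n. norm (dd b (Suc n)))"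
    using dd_summable[OF b(1)] by (subst summable_Suc_iff)
  have "(\<lambda>n. dd b n * t ^ n) sums HH b t" using HH_sums[OF b(1)] t by simp
  then have "(\<lambda>n. dd b (Suc n) * t ^ (Suc n)) sums (HH b t - dd b 0 * t ^ 0)"
    by (subst sums_Suc_iff) simp
  moreover have "dd b 0 = 1" using b by (simp add: dd_def)
  ultimately have s1: "(\<lambda>n. t * (dd b (Suc n) * t ^ n)) sums (HH b t - 1)" by (simp add: mult_ac)
  have sm: "summable (\<lambda>n. dd b (Suc n) * t ^ n)"
  proof (rule summable_comparison_test'[OF sumN, where N=0])
    fix n
    have "t^n \<le> 1" using t by (simp add: power_le_one)
    then show "norm (dd b (Suc n) * t ^ n) \<le> norm (dd b (Suc n))"
      using t by (simp add: abs_mult mult_left_le)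
  qed
  have s2: "(\<lambda>n. t * (dd b (Suc n) * t ^ n)) sums (t * (\<Sum>n. dd b (Suc n) * t ^ n))"
    by (rule sums_mult[OF summable_sums[OF sm]])
  have e: "HH b t - 1 = t * (\<Sum>n. dd b (Suc n) * t ^ n)" using sums_unique2[OF s1 s2] .
  have "\<bar>\<Sum>n. dd b (Suc n) * t ^ n\<bar> \<le> (\<Sum>n. norm (dd b (Suc n) * t ^ n))"
    using summable_norm[of "\<lambda>n. dd b (Suc n) * t ^ n"] sm
      summable_comparison_test'[OF sumN, where N=0 and f="\<lambda>n. norm (dd b (Suc n) * t ^ n)"]
    by (simp add: abs_mult power_le_one t mult_left_le)
  also have "\<dots> \<le> (\<Sum>n. norm (dd b (Suc n)))"
  proof (rule suminf_le)
    fix n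
    have "t^n \<le> 1" using t by (simp add: power_le_one)
    then show "norm (dd b (Suc n) * t ^ n) \<le> norm (dd b (Suc n))"
      using t by (simp add: abs_mult mult_left_le)
  next
    show "summable (\<lambda>n. norm (dd b (Suc n) * t ^ n))"
      by (rule summable_comparison_test'[OF sumN, where N=0])
         (simp add: abs_mult power_le_one t mult_left_le)
  qed (rule sumN)
  finally show ?thesis unfolding e using t by (simp add: abs_mult mult_left_mono)
qed


lemma MM_0: "MM b 0 = 0" by (simp add: MM_def GG_def)

lemma MM_bound:
  assumes b: "b > -1/2" "b \<noteq> 0" and t: "0 < t" "t \<le> 1"
  shows "\<bar>MM b t\<bar> \<le> ((\<Sum>n. norm (dd b (Suc n))) + 1) * t powr (b + 1)"
proof -
  define S where "S = (\<Sum>n. norm (dd b (Suc n)))"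
  have h1: "\<bar>HH b t - 1\<bar> \<le> t * S" unfolding S_def using HH_minus1_bound[OF b] t by simp
  have "(1 - t)^2 \<le> 1 - t"
  proof -
    have "(1 - t) * (1 - t) \<le> (1 - t) * 1" using t by (intro mult_left_mono) auto
    then show ?thesis by (simp add: power2_eq_square)
  qed
  then have "1 - t \<le> sqrt (1 - t)" by (rule real_le_rsqrt)
  moreover have "sqrt (1 - t) \<le> 1" using t by simp
  ultimately have h2: "\<bar>1 - sqrt (1 - t)\<bar> \<le> t" by simp
  have "\<bar>HH b t - sqrt (1 - t)\<bar> \<le> t * S + t" using h1 h2 by linarith
  also have "\<dots> = (S + 1) * t" by (simp add: algebra_simps)
  finally have h: "\<bar>HH b t - sqrt (1 - t)\<bar> \<le> (S + 1) * t" .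
  have "MM b t = t powr b * (HH b t - sqrt (1 - t))" by (simp add: MM_def GG_def algebra_simps)
  then have "\<bar>MM b t\<bar> = t powr b * \<bar>HH b t - sqrt (1 - t)\<bar>" by (simp add: abs_mult)
  also have "\<dots> \<le> t powr b * ((S + 1) * t)" by (rule mult_left_mono[OF h]) simp
  also have "\<dots> = (S + 1) * (t powr b * t powr 1)" using t by simp
  also have "t powr b * t powr 1 = t powr (b + 1)" by (simp add: powr_add)
  finally show ?thesis unfolding S_def .
qed

lemma MM_cont:
  assumes b: "b > -1/2" "b \<noteq> 0"
  shows "continuous_on {0..1} (MM b)"
proof (rule continuous_on_IccI)
  define K where "K = (\<Sum>n. norm (dd b (Suc n))) + 1"
  show "(MM b \<longlongrightarrow> MM b 0) (at_right 0)"
    unfolding MM_0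
  proof (rule Lim_null_comparison)
    show "\<forall>\<^sub>F t in at_right 0. norm (MM b t) \<le> K * t powr (b + 1)"
      unfolding eventually_at_right_field
      by (rule exI[of _ 1]) (use MM_bound[OF b] in \<open>auto simp: K_def\<close>)
    have "((\<lambda>t. t powr (b + 1)) \<longlongrightarrow> 0 powr (b + 1)) (at_right (0::real))"
      by (rule tendsto_powr') (use b eventually_at_right_less[of "0::real"] in
          \<open>auto intro!: tendsto_intros elim: eventually_mono\<close>)
    then have "((\<lambda>t. t powr (b + 1)) \<longlongrightarrow> 0) (at_right (0::real))" by simp
    then show "((\<lambda>t. K * t powr (b + 1)) \<longlongrightarrow> 0) (at_right 0)"
      by (rule tendsto_mult_right_zero)
  qed
  have hc: "(HH b \<longlongrightarrow> HH b 1) (at_left 1)"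
    using continuous_on_Icc_at_leftD[OF HH_cont[OF b(1)]] by simp
  have "((\<lambda>t. t powr b * HH b t - t powr b * sqrt (1 - t)) \<longlongrightarrow>
          1 powr b * HH b 1 - 1 powr b * sqrt (1 - 1)) (at_left 1)"
    by (intro tendsto_intros hc) auto
  then show "(MM b \<longlongrightarrow> MM b 1) (at_left 1)"
    by (simp add: MM_def[abs_def] GG_def[abs_def])
  fix x :: real assume "0 < x" "x < 1"
  then show "MM b \<midarrow>x\<rightarrow> MM b x"
    using DERIV_isCont[OF MM_deriv[OF b, of x]] by (simp add: isCont_def)
qed simp

lemma HH_1_Beta:
  assumes b: "b > -1/2" "b \<noteq> 0"
  shows "HH b 1 = (b + 1/2) * Beta (b + 1) (1/2)"
proof -
  have i1: "((\<lambda>t. (b + 1/2) * (t powr b * (1 - t) powr (-1/2))) has_integral (MM b 1 - MM b 0)) {0..1}"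
    by (rule fundamental_theorem_of_calculus_interior)
       (use MM_cont[OF b] MM_deriv[OF b] in
         \<open>auto simp: has_real_derivative_iff_has_vector_derivative[symmetric]\<close>)
  have "((\<lambda>t. t powr (b + 1 - 1) * (1 - t) powr (1/2 - 1)) has_integral Beta (b + 1) (1/2)) {0..1}"
    by (rule has_integral_Beta_real) (use b in auto)
  then have "((\<lambda>t. t powr b * (1 - t) powr (-1/2)) has_integral Beta (b + 1) (1/2)) {0..1}"
    by simp
  then have i2: "((\<lambda>t. (b + 1/2) * (t powr b * (1 - t) powr (-1/2))) has_integral
                    (b + 1/2) * Beta (b + 1) (1/2)) {0..1}"
    by (rule has_integral_mult_right)
  have "MM b 1 - MM b 0 = (b + 1/2) * Beta (b + 1) (1/2)"
    using has_integral_unique[OF i1 i2] .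
  moreover have "MM b 1 = HH b 1" by (simp add: MM_def GG_def)
  ultimately show ?thesis by (simp add: MM_0)
qed

lemma pos_not_nonpos_Ints: "(x::real) > 0 \<Longrightarrow> x \<notin> \<int>\<^sub>\<le>\<^sub>0"
  by (auto simp: nonpos_Ints_altdef)

lemma HH_1:
  assumes b: "b > -1/2" "b \<noteq> 0"
  shows "HH b 1 = sqrt pi * Gamma (b + 1) / Gamma (b + 1/2)"
proof -
  have g: "Gamma (b + 1/2 + 1) = (b + 1/2) * Gamma (b + 1/2)"
    by (rule Gamma_plus1, rule pos_not_nonpos_Ints) (use b in simp)
  have "b + 1 + 1/2 = b + 1/2 + 1" by simp
  then have "Beta (b + 1) (1/2) = Gamma (b + 1) * sqrt pi / ((b + 1/2) * Gamma (b + 1/2))"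
    unfolding Beta_def using g by (simp add: Gamma_one_half_real)
  moreover have "b + 1/2 > 0" using b by simp
  ultimately show ?thesis using HH_1_Beta[OF b] by simp
qed


lemma interval_interior:
  assumes "is_interval I" "a \<in> I" "b \<in> I" "a < x" "x < b"
  shows "x \<in> interior (I::real set)"
proof -
  have "{a<..<b} \<subseteq> I"
  proof
    fix y assume "y \<in> {a<..<b}"
    then have "a \<le> y" "y \<le> b" by auto
    then show "y \<in> I" using assms(1-3) unfolding is_interval_1 by blast
  qed
  then have "{a<..<b} \<subseteq> interior I" by (rule interior_maximal) simp
  moreover have "x \<in> {a<..<b}" using assms(4,5) by simp
  ultimately show ?thesis by blast
qed

locale geo =
  fixes \<alpha> \<tau> cj :: real and T X T' X' :: "real \<Rightarrow> real" and I :: "real set"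
  assumes a_pos: "0 < \<alpha>" and a_ne: "\<alpha> \<noteq> 1"
    and I_int: "is_interval I" and I0: "0 \<in> I" and T0: "T 0 = \<tau>" and X0: "X 0 = cj"
    and Tpos: "\<And>s. s \<in> I \<Longrightarrow> 0 < T s"
    and T'0: "T' 0 = 0" and X'0: "X' 0 \<noteq> 0"
    and dT: "\<And>s. s \<in> I \<Longrightarrow> (T has_real_derivative T' s) (at s within I)"
    and dX: "\<And>s. s \<in> I \<Longrightarrow> (X has_real_derivative X' s) (at s within I)"
    and dT': "\<And>s. s \<in> I \<Longrightarrow> (T' has_real_derivative
              (- scale \<alpha> (T s) * scale' \<alpha> (T s) * (X' s)\<^sup>2)) (at s within I)"
    and dX': "\<And>s. s \<in> I \<Longrightarrow> (X' has_real_derivative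
              (- 2 * (scale' \<alpha> (T s) / scale \<alpha> (T s)) * T' s * X' s)) (at s within I)"
begin

lemma tau_pos: "0 < \<tau>" using Tpos[OF I0] T0 by simp

lemma I_convex: "convex I" using I_int by (rule is_interval_convex)

lemma dA: assumes s: "s \<in> I" shows "((\<lambda>s. scale \<alpha> (T s)) has_real_derivative
      scale' \<alpha> (T s) * T' s) (at s within I)"
proof -
  have "((\<lambda>z. z powr \<alpha>) has_real_derivative \<alpha> * T s powr (\<alpha> - 1)) (at (T s))"
    by (rule has_real_derivative_powr) (rule Tpos[OF s])
  from DERIV_chain2[OF this dT[OF s]] show ?thesis by (simp add: scale_def scale'_def)
qed

lemma A_pos: "s \<in> I \<Longrightarrow> scale \<alpha> (T s) > 0"
  using Tpos[of s] by (simp add: scale_def)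

lemma alg_P: assumes "(A::real) > 0" shows "(a * Tp * A + a * Tp * A) * Xp + (- 2 * (a / A) * Tp * Xp) * (A * A) = 0"
proof -
  define c where "c = a / A"
  have a: "a = c * A" using assms by (simp add: c_def)
  show ?thesis unfolding c_def[symmetric] unfolding a by algebra
qed

lemma alg_E: assumes "(A::real) > 0" shows "
   - ((- A * a * Xp\<^sup>2) * Tp + (- A * a * Xp\<^sup>2) * Tp) + ((a * Tp * A + a * Tp * A) * (Xp * Xp)
   + ((- 2 * (a / A) * Tp * Xp) * Xp + (- 2 * (a / A) * Tp * Xp) * Xp) * (A * A)) = 0"
proof -
  define c where "c = a / A"
  have a: "a = c * A" using \<open>A > 0\<close> by (simp add: c_def)
  show ?thesis unfolding c_def[symmetric] unfolding a power2_eq_square by algebra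
qed

definition L where "L = (scale \<alpha> \<tau> * scale \<alpha> \<tau>) * X' 0"

lemma P_const: assumes "s \<in> I" shows "(scale \<alpha> (T s) * scale \<alpha> (T s)) * X' s = L"
proof -
  have "\<exists>c. \<forall>x\<in>I. (scale \<alpha> (T x) * scale \<alpha> (T x)) * X' x = c"
  proof (rule has_field_derivative_zero_constant[OF I_convex])
    fix x assume x: "x \<in> I"
    have d: "((\<lambda>s. (scale \<alpha> (T s) * scale \<alpha> (T s)) * X' s) has_real_derivative
        (scale' \<alpha> (T x) * T' x * scale \<alpha> (T x) + scale' \<alpha> (T x) * T' x * scale \<alpha> (T x)) * X' x
        + (- 2 * (scale' \<alpha> (T x) / scale \<alpha> (T x)) * T' x * X' x) * (scale \<alpha> (T x) * scale \<alpha> (T x))) (at x within I)"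
      by (rule DERIV_mult[OF DERIV_mult[OF dA[OF x] dA[OF x]] dX'[OF x]])
    then show "((\<lambda>s. (scale \<alpha> (T s) * scale \<alpha> (T s)) * X' s) has_real_derivative 0) (at x within I)"
      unfolding alg_P[OF A_pos[OF x]] .
  qed
  then obtain c where c: "\<forall>x\<in>I. (scale \<alpha> (T x) * scale \<alpha> (T x)) * X' x = c" by blast
  from c[rule_format, OF I0] c[rule_format, OF assms] show ?thesis by (simp add: L_def T0)
qed

lemma L_ne: "L \<noteq> 0" using X'0 tau_pos by (simp add: L_def scale_def)

lemma X'_eq: assumes "s \<in> I" shows "X' s = L / (scale \<alpha> (T s) * scale \<alpha> (T s))"
proof -
  have "scale \<alpha> (T s) * scale \<alpha> (T s) \<noteq> 0" using A_pos[OF assms] by simp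
  then show ?thesis using P_const[OF assms] by (simp add: eq_divide_eq mult.commute)
qed

lemma E_const: assumes "s \<in> I"
  shows "- (T' s * T' s) + (scale \<alpha> (T s) * scale \<alpha> (T s)) * (X' s * X' s)
         = (scale \<alpha> \<tau> * scale \<alpha> \<tau>) * (X' 0 * X' 0)"
proof -
  have "\<exists>c. \<forall>x\<in>I. - (T' x * T' x) + (scale \<alpha> (T x) * scale \<alpha> (T x)) * (X' x * X' x) = c"
  proof (rule has_field_derivative_zero_constant[OF I_convex])
    fix x assume x: "x \<in> I"
    have d: "((\<lambda>s. - (T' s * T' s) + (scale \<alpha> (T s) * scale \<alpha> (T s)) * (X' s * X' s)) has_real_derivative
        - ((- scale \<alpha> (T x) * scale' \<alpha> (T x) * (X' x)\<^sup>2) * T' x + (- scale \<alpha> (T x) * scale' \<alpha> (T x) * (X' x)\<^sup>2) * T' x)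
        + ((scale' \<alpha> (T x) * T' x * scale \<alpha> (T x) + scale' \<alpha> (T x) * T' x * scale \<alpha> (T x)) * (X' x * X' x)
        + ((- 2 * (scale' \<alpha> (T x) / scale \<alpha> (T x)) * T' x * X' x) * X' x
           + (- 2 * (scale' \<alpha> (T x) / scale \<alpha> (T x)) * T' x * X' x) * X' x) * (scale \<alpha> (T x) * scale \<alpha> (T x))))
        (at x within I)"
      by (rule DERIV_add[OF DERIV_minus[OF DERIV_mult[OF dT'[OF x] dT'[OF x]]]
               DERIV_mult[OF DERIV_mult[OF dA[OF x] dA[OF x]] DERIV_mult[OF dX'[OF x] dX'[OF x]]]])
    then show "((\<lambda>s. - (T' s * T' s) + (scale \<alpha> (T s) * scale \<alpha> (T s)) * (X' s * X' s)) has_real_derivative 0) (at x within I)"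
      unfolding alg_E[OF A_pos[OF x]] .
  qed
  then obtain c where c: "\<forall>x\<in>I. - (T' x * T' x) + (scale \<alpha> (T x) * scale \<alpha> (T x)) * (X' x * X' x) = c" by blast
  from c[rule_format, OF I0] c[rule_format, OF assms] show ?thesis by (simp add: T0 T'0)
qed

end

context geo begin

lemma I_sub: assumes "u \<in> I" "v \<in> I" shows "{u..v} \<subseteq> I"
proof
  fix y assume "y \<in> {u..v}"
  then have "u \<le> y" "y \<le> v" by auto
  then show "y \<in> I" using assms I_int unfolding is_interval_1 by blast
qed

lemma cont_within: "(f has_real_derivative D) (at x within S) \<Longrightarrow> continuous (at x within S) f"
  by (rule DERIV_continuous)

lemma contT: "continuous_on I T"
  unfolding continuous_on_eq_continuous_within
proof
  fix x assume "x \<in> I"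
  from DERIV_continuous[OF dT[OF this]] show "continuous (at x within I) T" .
qed
lemma contT': "continuous_on I T'"
  unfolding continuous_on_eq_continuous_within
proof
  fix x assume "x \<in> I"
  from DERIV_continuous[OF dT'[OF this]] show "continuous (at x within I) T'" .
qed
lemma contX: "continuous_on I X"
  unfolding continuous_on_eq_continuous_within
proof
  fix x assume "x \<in> I"
  from DERIV_continuous[OF dX[OF this]] show "continuous (at x within I) X" .
qed

lemma at_int: "u \<in> I \<Longrightarrow> v \<in> I \<Longrightarrow> u < x \<Longrightarrow> x < v \<Longrightarrow> at x within I = at x"
  by (rule at_within_interior, rule interval_interior[OF I_int])

lemma X'_ne: "s \<in> I \<Longrightarrow> X' s \<noteq> 0"
  using X'_eq[of s] L_ne A_pos[of s] by simp

lemma T''_neg: assumes "s \<in> I" shows "- scale \<alpha> (T s) * scale' \<alpha> (T s) * (X' s)\<^sup>2 < 0"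
proof -
  have "scale' \<alpha> (T s) > 0" using Tpos[OF assms] a_pos by (simp add: scale'_def)
  moreover have "(X' s)\<^sup>2 > 0" using X'_ne[OF assms] by simp
  ultimately show ?thesis using A_pos[OF assms] by (simp add: mult_pos_pos)
qed

lemma T'_dec: assumes "u \<in> I" "v \<in> I" "u < v" shows "T' v < T' u"
proof (rule DERIV_neg_imp_decreasing_open[OF assms(3)])
  fix x assume x: "u < x" "x < v"
  have xI: "x \<in> I" using I_sub[OF assms(1,2)] x by auto
  show "\<exists>y. DERIV T' x :> y \<and> y < 0"
    using dT'[OF xI] T''_neg[OF xI] at_int[OF assms(1,2) x] by auto
next
  show "continuous_on {u..v} T'" using contT' I_sub[OF assms(1,2)] by (rule continuous_on_subset)
qed

lemma T'_pos_side: assumes "s \<in> I" "0 < s" shows "T' s < 0"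
  using T'_dec[OF I0 assms(1,2)] T'0 by simp

lemma T'_neg_side: assumes "s \<in> I" "s < 0" shows "T' s > 0"
  using T'_dec[OF assms(1) I0 assms(2)] T'0 by simp

lemma T_lt: assumes s: "s \<in> I" "s \<noteq> 0" shows "T s < \<tau>"
proof (cases "s > 0")
  case True
  have "T s < T 0"
  proof (rule DERIV_neg_imp_decreasing_open[OF True])
    fix x assume x: "0 < x" "x < s"
    have xI: "x \<in> I" using I_sub[OF I0 s(1)] x by auto
    show "\<exists>y. DERIV T x :> y \<and> y < 0"
      using dT[OF xI] T'_pos_side[OF xI x(1)] at_int[OF I0 s(1) x] by auto
  next
    show "continuous_on {0..s} T" using contT I_sub[OF I0 s(1)] by (rule continuous_on_subset)
  qed
  then show ?thesis using T0 by simp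
next
  case False
  then have neg: "s < 0" using s(2) by simp
  have "T s < T 0"
  proof (rule DERIV_pos_imp_increasing_open[OF neg])
    fix x assume x: "s < x" "x < 0"
    have xI: "x \<in> I" using I_sub[OF s(1) I0] x by auto
    show "\<exists>y. DERIV T x :> y \<and> y > 0"
      using dT[OF xI] T'_neg_side[OF xI x(2)] at_int[OF s(1) I0 x] by auto
  next
    show "continuous_on {s..0} T" using contT I_sub[OF s(1) I0] by (rule continuous_on_subset)
  qed
  then show ?thesis using T0 by simp
qed

lemma sX'_pos: assumes "s \<in> I" shows "sgn L * X' s > 0"
proof -
  have "scale \<alpha> (T s) * scale \<alpha> (T s) > 0" using A_pos[OF assms] by simp
  then show ?thesis using X'_eq[OF assms] L_ne
    by (cases "L > 0") (auto simp: sgn_if divide_pos_pos divide_neg_pos)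
qed

lemma X_abs: assumes s: "s \<in> I" "s \<noteq> 0"
  shows "\<bar>X s - cj\<bar> = sgn s * sgn L * (X s - cj)"
proof (cases "s > 0")
  case True
  have "sgn L * X 0 < sgn L * X s"
  proof (rule DERIV_pos_imp_increasing_open[OF True])
    fix x assume x: "0 < x" "x < s"
    have xI: "x \<in> I" using I_sub[OF I0 s(1)] x by auto
    show "\<exists>y. DERIV (\<lambda>u. sgn L * X u) x :> y \<and> y > 0"
      using DERIV_cmult[OF dX[OF xI], of "sgn L"] sX'_pos[OF xI] at_int[OF I0 s(1) x] by auto
  next
    show "continuous_on {0..s} (\<lambda>u. sgn L * X u)"
      using contX I_sub[OF I0 s(1)] by (intro continuous_intros) (rule continuous_on_subset)
  qed
  then show ?thesis using True L_ne X0 by (cases "L > 0") (auto simp: sgn_if)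
next
  case False
  then have neg: "s < 0" using s(2) by simp
  have "sgn L * X s < sgn L * X 0"
  proof (rule DERIV_pos_imp_increasing_open[OF neg])
    fix x assume x: "s < x" "x < 0"
    have xI: "x \<in> I" using I_sub[OF s(1) I0] x by auto
    show "\<exists>y. DERIV (\<lambda>u. sgn L * X u) x :> y \<and> y > 0"
      using DERIV_cmult[OF dX[OF xI], of "sgn L"] sX'_pos[OF xI] at_int[OF s(1) I0 x] by auto
  next
    show "continuous_on {s..0} (\<lambda>u. sgn L * X u)"
      using contX I_sub[OF s(1) I0] by (intro continuous_intros) (rule continuous_on_subset)
  qed
  then show ?thesis using neg L_ne X0 by (cases "L > 0") (auto simp: sgn_if)
qed

lemma T'_abs: assumes "s \<in> I"
  shows "\<bar>T' s\<bar> = \<bar>L\<bar> / scale \<alpha> (T s) *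
           sqrt (1 - (scale \<alpha> (T s) * scale \<alpha> (T s)) / (scale \<alpha> \<tau> * scale \<alpha> \<tau>))"
proof -
  define A where "A = scale \<alpha> (T s)"
  define B where "B = scale \<alpha> \<tau>"
  have A: "A > 0" using A_pos[OF assms] by (simp add: A_def)
  have B: "B > 0" using tau_pos by (simp add: B_def scale_def)
  have x1: "X' s = L / (A * A)" using X'_eq[OF assms] by (simp add: A_def)
  have x0: "X' 0 = L / (B * B)" using X'_eq[OF I0] by (simp add: B_def T0)
  have e: "- (T' s * T' s) + (A * A) * (X' s * X' s) = (B * B) * (X' 0 * X' 0)"
    using E_const[OF assms] by (simp add: A_def B_def T0)
  have h1: "(A * A) * (X' s * X' s) = (L * L) / (A * A)"
    unfolding x1 using A by (simp add: divide_simps)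
  have h2: "(B * B) * (X' 0 * X' 0) = (L * L) / (B * B)"
    unfolding x0 using B by (simp add: divide_simps)
  have h3: "(L / A) * (L / A) * (1 - (A * A) / (B * B)) = (L * L) / (A * A) - (L * L) / (B * B)"
    using A B by (simp add: divide_simps) (simp add: algebra_simps)
  have "T' s * T' s = (L / A) * (L / A) * (1 - (A * A) / (B * B))"
    using e h1 h2 h3 by linarith
  then have "\<bar>T' s\<bar> = sqrt ((L / A) * (L / A) * (1 - (A * A) / (B * B)))"
    by (metis real_sqrt_abs2)
  also have "\<dots> = sqrt ((L / A) * (L / A)) * sqrt (1 - (A * A) / (B * B))"
    by (rule real_sqrt_mult)
  also have "sqrt ((L / A) * (L / A)) = \<bar>L\<bar> / A"
    using A by (metis real_sqrt_abs2 abs_div_pos)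
  finally show ?thesis by (simp add: A_def B_def)
qed

end

definition QQ :: "real \<Rightarrow> real \<Rightarrow> real \<Rightarrow> real" where
  "QQ \<alpha> \<tau> t = GG ((1 - \<alpha>) / (2 * \<alpha>)) ((t / \<tau>) powr (2 * \<alpha>))"

lemma b_props: assumes "0 < (\<alpha>::real)" "\<alpha> \<noteq> 1"
  shows "(1 - \<alpha>) / (2 * \<alpha>) > -1/2" "(1 - \<alpha>) / (2 * \<alpha>) \<noteq> 0"
  using assms by (auto simp: field_simps)

lemma GG_cont: assumes "b > -1/2" shows "continuous_on {0<..1} (GG b)"
proof -
  have "continuous_on {0<..1} (HH b)"
    by (rule continuous_on_subset[OF HH_cont[OF assms]]) auto
  then show ?thesis unfolding GG_def[abs_def]
    by (intro continuous_intros) auto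
qed

lemma QQ_cont: assumes "0 < \<alpha>" "\<alpha> \<noteq> 1" "0 < \<tau>"
  shows "continuous_on {0<..\<tau>} (QQ \<alpha> \<tau>)"
proof -
  have c: "continuous_on {0<..\<tau>} (\<lambda>t. (t / \<tau>) powr (2 * \<alpha>))"
    using assms by (intro continuous_intros) auto
  have m: "(\<lambda>t. (t / \<tau>) powr (2 * \<alpha>)) ` {0<..\<tau>} \<subseteq> {0<..1}"
  proof
    fix y assume "y \<in> (\<lambda>t. (t / \<tau>) powr (2 * \<alpha>)) ` {0<..\<tau>}"
    then obtain t where t: "0 < t" "t \<le> \<tau>" and y: "y = (t / \<tau>) powr (2 * \<alpha>)" by auto
    have "t / \<tau> \<le> 1" "0 < t / \<tau>" using t assms by auto
    then have "\<bar>t / \<tau>\<bar> \<le> 1" by simp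
    then have "(t / \<tau>) powr (2 * \<alpha>) \<le> 1" using assms by (intro powr_le1) auto
    then show "y \<in> {0<..1}" using y t assms by simp
  qed
  show ?thesis unfolding QQ_def[abs_def]
    by (rule continuous_on_compose2[OF GG_cont[OF b_props(1)[OF assms(1,2)]] c m])
qed

lemma QQ_deriv:
  assumes a: "0 < \<alpha>" "\<alpha> \<noteq> 1" and tau: "0 < \<tau>" and t: "0 < t" "t < \<tau>"
  shows "(QQ \<alpha> \<tau> has_real_derivative
           (1 - \<alpha>) / \<tau> * (1 / (t / \<tau>) powr \<alpha>) / sqrt (1 - (t / \<tau>) powr \<alpha> * (t / \<tau>) powr \<alpha>)) (at t)"
proof -
  define b where "b = (1 - \<alpha>) / (2 * \<alpha>)"
  define y where "y = t / \<tau>"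
  define p where "p = y powr \<alpha>"
  have y: "0 < y" "y < 1" using t tau by (auto simp: y_def)
  have p: "0 < p" "p < 1" using y a powr_less_mono2[of \<alpha> y 1] by (auto simp: p_def)
  have w: "y powr (2 * \<alpha>) = p * p" unfolding p_def
    by (simp add: powr_add[symmetric])
  have b: "b > -1/2" "b \<noteq> 0" using b_props[OF a] by (simp_all add: b_def)
  have w1: "0 < p * p" "p * p < 1" using p mult_strict_mono[of p 1 p 1] by auto
  have dw: "((\<lambda>t. (t / \<tau>) powr (2 * \<alpha>)) has_real_derivative
              (2 * \<alpha>) * y powr (2 * \<alpha> - 1) * (1 / \<tau>)) (at t)"
  proof -
    have h1: "((\<lambda>z. z powr (2 * \<alpha>)) has_real_derivative (2 * \<alpha>) * y powr (2 * \<alpha> - 1)) (at ((\<lambda>t. t / \<tau>) t))"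
      by (simp only: y_def[symmetric]) (rule has_real_derivative_powr, rule y(1))
    have h2: "((\<lambda>t. t / \<tau>) has_real_derivative 1 / \<tau>) (at t)"
      using DERIV_cdivide[OF DERIV_ident, of \<tau> t] by simp
    show ?thesis using DERIV_chain2[of "\<lambda>z. z powr (2 * \<alpha>)" _ "\<lambda>t. t / \<tau>" t, OF h1 h2] by simp
  qed
  have dG: "(GG b has_real_derivative b * (p * p) powr (b - 1) * (1 - p * p) powr (-1/2)) (at (p * p))"
    by (rule GG_deriv[OF b w1])
  have "((\<lambda>t. GG b ((t / \<tau>) powr (2 * \<alpha>))) has_real_derivative
          (b * (p * p) powr (b - 1) * (1 - p * p) powr (-1/2)) * ((2 * \<alpha>) * y powr (2 * \<alpha> - 1) * (1 / \<tau>))) (at t)"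
    using DERIV_chain2[OF dG[folded w, unfolded y_def] dw] unfolding y_def w[unfolded y_def] .
  moreover have "(b * (p * p) powr (b - 1) * (1 - p * p) powr (-1/2)) * ((2 * \<alpha>) * y powr (2 * \<alpha> - 1) * (1 / \<tau>))
     = (1 - \<alpha>) / \<tau> * (1 / p) / sqrt (1 - p * p)"
  proof -
    have e1: "(p * p) powr (b - 1) * y powr (2 * \<alpha> - 1) = 1 / p"
    proof -
      have "(p * p) powr (b - 1) = y powr (2 * \<alpha> * (b - 1))"
        unfolding w[symmetric] using y by (simp add: powr_powr)
      then have "(p * p) powr (b - 1) * y powr (2 * \<alpha> - 1) = y powr (2 * \<alpha> * (b - 1) + (2 * \<alpha> - 1))"
        by (simp add: powr_add)
      also have "2 * \<alpha> * (b - 1) + (2 * \<alpha> - 1) = - \<alpha>"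
        using a by (simp add: b_def field_simps)
      also have "y powr (- \<alpha>) = 1 / p" by (simp add: p_def powr_minus divide_inverse)
      finally show ?thesis .
    qed
    have e2: "(1 - p * p) powr (-1/2) = 1 / sqrt (1 - p * p)"
    proof -
      have "(1 - p * p) powr (-(1/2)) = inverse ((1 - p * p) powr (1/2))" by (rule powr_minus)
      also have "(1 - p * p) powr (1/2) = sqrt (1 - p * p)" using w1 by (simp add: powr_half_sqrt)
      finally show ?thesis by (simp add: inverse_eq_divide)
    qed
    have e3: "b * (2 * \<alpha>) = 1 - \<alpha>" using a by (simp add: b_def)
    have "(b * (p * p) powr (b - 1) * (1 - p * p) powr (-1/2)) * ((2 * \<alpha>) * y powr (2 * \<alpha> - 1) * (1 / \<tau>))
       = (b * (2 * \<alpha>)) * ((p * p) powr (b - 1) * y powr (2 * \<alpha> - 1)) * (1 - p * p) powr (-1/2) / \<tau>"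
      by (simp add: mult_ac)
    also have "\<dots> = (1 - \<alpha>) * (1 / p) * (1 / sqrt (1 - p * p)) / \<tau>"
      unfolding e1 e2 e3 ..
    finally show ?thesis by simp
  qed
  ultimately show ?thesis unfolding QQ_def[abs_def] b_def[symmetric] p_def y_def by simp
qed


lemma alg_key:
  fixes A B S \<tau> \<alpha> e sg L :: real
  assumes "A > 0" "B > 0" "S > 0" "\<tau> > 0"
  shows "(1 - \<alpha>) / \<tau> * (1 / (A / B)) / S * (- e * ((sg * L) / A * S))
         - e * sg * (\<alpha> - 1) * (B / \<tau>) * (L / (A * A)) = 0"
  using assms by (simp add: field_simps)

context geo begin

lemma key:
  assumes s: "s \<in> I"
  shows "GG ((1 - \<alpha>) / (2 * \<alpha>)) ((T s / \<tau>) powr (2 * \<alpha>)) - GG ((1 - \<alpha>) / (2 * \<alpha>)) 1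
         = (\<alpha> - 1) * \<tau> powr (\<alpha> - 1) * \<bar>X s - cj\<bar>"
proof (cases "s = 0")
  case True
  then show ?thesis using T0 X0 tau_pos by simp
next
  case False
  define \<kappa> where "\<kappa> = sgn s * sgn L * (\<alpha> - 1) * \<tau> powr (\<alpha> - 1)"
  define \<Psi> where "\<Psi> u = QQ \<alpha> \<tau> (T u) - \<kappa> * X u" for u
  define lo where "lo = min 0 s"
  define hi where "hi = max 0 s"
  have lohi: "lo < hi" using False by (simp add: lo_def hi_def)
  have loI: "lo \<in> I" and hiI: "hi \<in> I" using s I0 by (auto simp: lo_def hi_def min_def max_def)
  have sub: "{lo..hi} \<subseteq> I" by (rule I_sub[OF loI hiI])
  have Tle: "T u \<in> {0<..\<tau>}" if "u \<in> I" for u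
    using Tpos[OF that] T_lt[OF that] T0 by (cases "u = 0") (auto simp: less_imp_le)
  have cont: "continuous_on {lo..hi} \<Psi>"
  proof -
    have cT: "continuous_on {lo..hi} T" using contT sub by (rule continuous_on_subset)
    have cX: "continuous_on {lo..hi} X" using contX sub by (rule continuous_on_subset)
    have m: "T ` {lo..hi} \<subseteq> {0<..\<tau>}" using Tle sub by auto
    have "continuous_on {lo..hi} (\<lambda>u. QQ \<alpha> \<tau> (T u))"
      by (rule continuous_on_compose2[OF QQ_cont[OF a_pos a_ne tau_pos] cT m])
    then show ?thesis unfolding \<Psi>_def[abs_def] using cX by (intro continuous_intros)
  qed
  have der: "(\<Psi> has_real_derivative 0) (at x)" if x: "lo < x" "x < hi" for x
  proof -
    have xI: "x \<in> I" using sub x by auto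
    have x0: "x \<noteq> 0" using x by (auto simp: lo_def hi_def)
    have sgx: "sgn x = sgn s" using x by (auto simp: lo_def hi_def sgn_if min_def max_def split: if_splits)
    have atx: "at x within I = at x" by (rule at_int[OF loI hiI x])
    have Tx: "0 < T x" "T x < \<tau>" using Tpos[OF xI] T_lt[OF xI x0] by auto
    define A where "A = scale \<alpha> (T x)"
    define B where "B = scale \<alpha> \<tau>"
    define S where "S = sqrt (1 - (A * A) / (B * B))"
    have A: "A > 0" using A_pos[OF xI] by (simp add: A_def)
    have B: "B > 0" using tau_pos by (simp add: B_def scale_def)
    have p: "(T x / \<tau>) powr \<alpha> = A / B"
      using Tx tau_pos by (simp add: A_def B_def scale_def powr_divide)
    have AB: "A < B" using Tx a_pos by (simp add: A_def B_def scale_def powr_less_mono2)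
    have S: "S > 0"
    proof -
      have "A * A < B * B" using A AB by (intro mult_strict_mono) auto
      then have "(A * A) / (B * B) < 1" using B by simp
      then show ?thesis by (simp add: S_def)
    qed
    have S': "sqrt (1 - A / B * (A / B)) = S"
      unfolding S_def by simp
    have dQ: "(QQ \<alpha> \<tau> has_real_derivative (1 - \<alpha>) / \<tau> * (1 / (A / B)) / S) (at (T x))"
      using QQ_deriv[OF a_pos a_ne tau_pos Tx] unfolding p S' .
    have T'x: "T' x = - sgn s * ((sgn L * L) / A * S)"
    proof -
      have sL: "sgn L * L = \<bar>L\<bar>" by (simp add: sgn_if)
      have "\<bar>T' x\<bar> = (sgn L * L) / A * S"
        unfolding sL A_def B_def S_def by (rule T'_abs[OF xI])
      moreover have "T' x = - sgn x * \<bar>T' x\<bar>"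
        using T'_pos_side[OF xI] T'_neg_side[OF xI] x0 by (cases "x > 0") (auto simp: sgn_if)
      ultimately show ?thesis using sgx by simp
    qed
    have X'x: "X' x = L / (A * A)" using X'_eq[OF xI] by (simp add: A_def)
    have tp: "\<tau> powr (\<alpha> - 1) = B / \<tau>" using tau_pos by (simp add: B_def scale_def powr_diff)
    have dT1: "(T has_real_derivative T' x) (at x)" using dT[OF xI] unfolding atx .
    have dX1: "(X has_real_derivative X' x) (at x)" using dX[OF xI] unfolding atx .
    have "(\<Psi> has_real_derivative ((1 - \<alpha>) / \<tau> * (1 / (A / B)) / S) * T' x - \<kappa> * X' x) (at x)"
      unfolding \<Psi>_def[abs_def]
      by (intro DERIV_diff DERIV_cmult DERIV_chain2[OF dQ dT1] dX1)
    moreover have "((1 - \<alpha>) / \<tau> * (1 / (A / B)) / S) * T' x - \<kappa> * X' x = 0"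
      unfolding T'x X'x \<kappa>_def tp using alg_key[OF A B S tau_pos, of \<alpha> "sgn s" "sgn L" L]
      by (simp add: mult_ac)
    ultimately show ?thesis by simp
  qed
  have "\<Psi> hi = \<Psi> lo"
  proof (rule has_derivative_zero_unique_strong_interval[of "{lo, hi}" lo hi \<Psi>])
    show "continuous_on {lo..hi} \<Psi>" by (rule cont)
    fix x assume "x \<in> {lo..hi} - {lo, hi}"
    then have x: "lo < x" "x < hi" by auto
    have "(\<Psi> has_derivative (*) 0) (at x)"
      using der[OF x] unfolding has_field_derivative_def .
    moreover have eq: "((*) 0 :: real \<Rightarrow> real) = (\<lambda>h. 0)" by auto
    ultimately have "(\<Psi> has_derivative (\<lambda>h. 0)) (at x)" by simp
    then show "(\<Psi> has_derivative (\<lambda>h. 0)) (at x within {lo..hi})"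
      by (rule has_derivative_at_withinI)
  qed (use lohi in auto)
  then have "\<Psi> s = \<Psi> 0" by (auto simp: lo_def hi_def min_def max_def split: if_splits)
  then have e: "QQ \<alpha> \<tau> (T s) - QQ \<alpha> \<tau> \<tau> = \<kappa> * (X s - cj)"
    using T0 X0 by (simp add: \<Psi>_def algebra_simps)
  have q1: "QQ \<alpha> \<tau> \<tau> = GG ((1 - \<alpha>) / (2 * \<alpha>)) 1" using tau_pos by (simp add: QQ_def)
  have "\<kappa> * (X s - cj) = (\<alpha> - 1) * \<tau> powr (\<alpha> - 1) * (sgn s * sgn L * (X s - cj))"
    by (simp add: \<kappa>_def mult_ac)
  also have "sgn s * sgn L * (X s - cj) = \<bar>X s - cj\<bar>" using X_abs[OF s False] by simp
  finally show ?thesis using e q1 by (simp add: QQ_def)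
qed

end

lemma geo_from:
  assumes "0 < \<alpha>" "\<alpha> \<noteq> 1" "orth_geodesic \<alpha> \<tau> cj T X I"
  shows "\<exists>T' X'. geo \<alpha> \<tau> cj T X T' X' I"
  using assms unfolding orth_geodesic_def geo_def by blast

lemma C_eq:
  assumes "0 < \<alpha>" "\<alpha> \<noteq> 1"
  shows "GG ((1 - \<alpha>) / (2 * \<alpha>)) 1 = C_const \<alpha>"
proof -
  define b where "b = (1 - \<alpha>) / (2 * \<alpha>)"
  have b: "b > -1/2" "b \<noteq> 0" using b_props[OF assms] by (simp_all add: b_def)
  have "GG b 1 = HH b 1" by (simp add: GG_def)
  also have "\<dots> = sqrt pi * Gamma (b + 1) / Gamma (b + 1/2)" by (rule HH_1[OF b])
  also have "b + 1 = (1 + \<alpha>) / (2 * \<alpha>)" using assms by (simp add: b_def field_simps)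
  also have "b + 1/2 = 1 / (2 * \<alpha>)" using assms by (simp add: b_def field_simps)
  finally show ?thesis by (simp add: b_def C_const_def)
qed

lemma Ffun_GG:
  assumes a: "0 < \<alpha>" "\<alpha> \<noteq> 1" and z: "0 < z"
  shows "F_fun \<alpha> z = GG ((1 - \<alpha>) / (2 * \<alpha>)) (z^2)"
proof -
  define b where "b = (1 - \<alpha>) / (2 * \<alpha>)"
  have b: "b > -1/2" "b \<noteq> 0" using b_props[OF a] by (simp_all add: b_def)
  have h: "hyp2F1 (1/2) b ((1 + \<alpha>) / (2 * \<alpha>)) (z^2) = HH b (z^2)"
  proof -
    have "(1 + \<alpha>) / (2 * \<alpha>) = b + 1" using a by (simp add: b_def field_simps)
    then show ?thesis using hyp_eq[OF b] by simp
  qed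
  have p: "z powr ((1 - \<alpha>) / \<alpha>) = (z^2) powr b"
  proof -
    have "(z^2) powr b = (z powr 2) powr b" using z by simp
    also have "\<dots> = z powr (2 * b)" by (simp add: powr_powr)
    also have "2 * b = (1 - \<alpha>) / \<alpha>" using a unfolding b_def by (simp add: field_simps)
    finally show ?thesis by simp
  qed
  show ?thesis unfolding F_fun_def GG_def b_def[symmetric] h p ..
qed

lemma w_eq:
  assumes "0 < t" "0 < \<tau>"
  shows "(scale \<alpha> t)\<^sup>2 / (scale \<alpha> \<tau>)\<^sup>2 = ((t / \<tau>) powr \<alpha>)^2"
  using assms by (simp add: scale_def powr_divide power_divide)

lemma pw2: "(y powr \<alpha>)^2 = y powr (2 * \<alpha>)" for y :: real
proof -
  have "(y powr \<alpha>)^2 = y powr \<alpha> * y powr \<alpha>" by (rule power2_eq_square)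
  also have "\<dots> = y powr (\<alpha> + \<alpha>)" by (rule powr_add[symmetric])
  also have "\<alpha> + \<alpha> = 2 * \<alpha>" by simp
  finally show ?thesis .
qed

lemma finv_eq:
  assumes a: "0 < \<alpha>" "\<alpha> \<noteq> 1" and t: "0 < t" "t \<le> \<tau>"
  shows "f_inv \<alpha> (sqrt (1 - (scale \<alpha> t)\<^sup>2 / (scale \<alpha> \<tau>)\<^sup>2))
         = \<alpha> / (\<alpha> - 1) * (GG ((1 - \<alpha>) / (2 * \<alpha>)) ((t / \<tau>) powr (2 * \<alpha>)) - C_const \<alpha>)"
proof -
  define z where "z = (t / \<tau>) powr \<alpha>"
  have tau: "0 < \<tau>" using t by simp
  have z: "0 < z" "z \<le> 1" using t a by (auto simp: z_def powr_le1)
  have zz: "z^2 \<le> 1" using z by (simp add: power_le_one)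
  have "1 - (sqrt (1 - z^2))\<^sup>2 = z^2" using zz by simp
  then have s: "sqrt (1 - (sqrt (1 - z^2))\<^sup>2) = z" using z by simp
  show ?thesis
    unfolding f_inv_def w_eq[OF t(1) tau] z_def[symmetric] s Ffun_GG[OF a z(1)]
    using t pw2[of "t / \<tau>" \<alpha>] by (simp add: z_def)
qed

lemma GG_inj:
  assumes b: "b > -1/2" "b \<noteq> 0"
  shows "inj_on (GG b) {0<..<1}"
proof -
  have strict: "GG b x \<noteq> GG b y" if xy: "0 < x" "x < y" "y < 1" for x y
  proof -
    have c: "continuous_on {x..y} (GG b)"
      by (rule continuous_on_subset[OF GG_cont[OF b(1)]]) (use xy in auto)
    have d: "GG b x < GG b y" if "b > 0"
    proof (rule DERIV_pos_imp_increasing_open[OF xy(2) _ c])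
      fix u assume u: "x < u" "u < y"
      have "b * u powr (b - 1) * (1 - u) powr (- 1 / 2) > 0"
        using u xy that by (intro mult_pos_pos) auto
      moreover have "0 < u" "u < 1" using u xy by auto
      ultimately show "\<exists>d. DERIV (GG b) u :> d \<and> d > 0"
        using GG_deriv[OF b] by blast
    qed
    have e: "GG b x > GG b y" if "b < 0"
    proof (rule DERIV_neg_imp_decreasing_open[OF xy(2) _ c])
      fix u assume u: "x < u" "u < y"
      have "b * u powr (b - 1) * (1 - u) powr (- 1 / 2) < 0"
        using u xy that by (intro mult_neg_pos) auto
      moreover have "0 < u" "u < 1" using u xy by auto
      ultimately show "\<exists>d. DERIV (GG b) u :> d \<and> d < 0"
        using GG_deriv[OF b] by blast
    qed
    show ?thesis using d e b(2) by (cases "b > 0") auto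
  qed
  show ?thesis unfolding inj_on_def
    by (metis greaterThanLessThan_iff linorder_neqE_linordered_idom strict)
qed

lemma F_inj:
  assumes a: "0 < \<alpha>" "\<alpha> \<noteq> 1"
  shows "inj_on (F_fun \<alpha>) {0<..<1}"
proof (rule inj_onI)
  fix x y assume x: "x \<in> {0<..<1}" and y: "y \<in> {0<..<1}" and e: "F_fun \<alpha> x = F_fun \<alpha> y"
  have b: "(1 - \<alpha>) / (2 * \<alpha>) > -1/2" "(1 - \<alpha>) / (2 * \<alpha>) \<noteq> 0" using b_props[OF a] by auto
  have x2: "x^2 \<in> {0<..<1}" using x by (auto simp: power_less_one_iff)
  have y2: "y^2 \<in> {0<..<1}" using y by (auto simp: power_less_one_iff)
  have "GG ((1 - \<alpha>) / (2 * \<alpha>)) (x^2) = GG ((1 - \<alpha>) / (2 * \<alpha>)) (y^2)"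
    using e Ffun_GG[OF a] x y by simp
  then have "x^2 = y^2" using inj_onD[OF GG_inj[OF b] _ x2 y2] by blast
  then show "x = y" using x y by (simp add: power2_eq_iff_nonneg)
qed


theorem corollary2:
  fixes \<alpha> \<tau>0 \<tau>1 t2 t3 c1 c2 s1 s2 s3 :: real
    and T0 X0 T1 X1 :: "real \<Rightarrow> real" and I0 I1 :: "real set"
  assumes "0 < \<alpha>" and "\<alpha> \<noteq> 1"
    and "0 < c1" and "c1 < c2" and "0 < \<tau>0"
    and "orth_geodesic \<alpha> \<tau>0 0 T0 X0 I0"
    and "s1 \<in> I0" and "T0 s1 = \<tau>1" and "X0 s1 = c1"
    and "s3 \<in> I0" and "T0 s3 = t3" and "X0 s3 = c2"
    and "orth_geodesic \<alpha> \<tau>1 c1 T1 X1 I1"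
    and "s2 \<in> I1" and "T1 s2 = t2" and "X1 s2 = c2"
  shows "kin_vel \<alpha> \<tau>0 0 t3 c2 =
    sqrt (1 - G_fun \<alpha> (f_inv \<alpha> (kin_vel \<alpha> \<tau>0 0 \<tau>1 c1)
               + (1 - (kin_vel \<alpha> \<tau>0 0 \<tau>1 c1)\<^sup>2) powr ((1 - \<alpha>) / (2 * \<alpha>))
                 * f_inv \<alpha> (kin_vel \<alpha> \<tau>1 c1 t2 c2)) powr (2 * \<alpha>))"
proof -
  note a = assms(1,2)
  obtain T0' X0' where g0: "geo \<alpha> \<tau>0 0 T0 X0 T0' X0' I0" using geo_from[OF a assms(6)] by blast
  obtain T1' X1' where g1: "geo \<alpha> \<tau>1 c1 T1 X1 T1' X1' I1" using geo_from[OF a assms(13)] by blast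
  define b where "b = (1 - \<alpha>) / (2 * \<alpha>)"
  define C where "C = C_const \<alpha>"
  have C: "GG b 1 = C" using C_eq[OF a] by (simp add: b_def C_def)
  have s1: "s1 \<noteq> 0" using geo.X0[OF g0] assms(3,9) by auto
  have s3: "s3 \<noteq> 0" using geo.X0[OF g0] assms(3,4,12) by auto
  have s2: "s2 \<noteq> 0" using geo.X0[OF g1] assms(4,16) by auto
  have tau1: "0 < \<tau>1" "\<tau>1 < \<tau>0"
    using geo.Tpos[OF g0 assms(7)] geo.T_lt[OF g0 assms(7) s1] assms(8) by auto
  have tt3: "0 < t3" "t3 < \<tau>0"
    using geo.Tpos[OF g0 assms(10)] geo.T_lt[OF g0 assms(10) s3] assms(11) by auto
  have tt2: "0 < t2" "t2 < \<tau>1"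
    using geo.Tpos[OF g1 assms(14)] geo.T_lt[OF g1 assms(14) s2] assms(15) by auto
  have k1: "GG b ((\<tau>1 / \<tau>0) powr (2 * \<alpha>)) - C = (\<alpha> - 1) * \<tau>0 powr (\<alpha> - 1) * c1"
    using geo.key[OF g0 assms(7)] assms(3,8,9) C by (simp add: b_def)
  have k3: "GG b ((t3 / \<tau>0) powr (2 * \<alpha>)) - C = (\<alpha> - 1) * \<tau>0 powr (\<alpha> - 1) * c2"
    using geo.key[OF g0 assms(10)] assms(3,4,11,12) C by (simp add: b_def)
  have k2: "GG b ((t2 / \<tau>1) powr (2 * \<alpha>)) - C = (\<alpha> - 1) * \<tau>1 powr (\<alpha> - 1) * (c2 - c1)"
    using geo.key[OF g1 assms(14)] assms(4,15,16) C by (simp add: b_def)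
  have am1: "\<alpha> - 1 \<noteq> 0" using a by simp
  define v1 where "v1 = kin_vel \<alpha> \<tau>0 0 \<tau>1 c1"
  define v2 where "v2 = kin_vel \<alpha> \<tau>1 c1 t2 c2"
  have v1: "v1 = sqrt (1 - (scale \<alpha> \<tau>1)\<^sup>2 / (scale \<alpha> \<tau>0)\<^sup>2)"
    using assms(3) by (simp add: v1_def kin_vel_def)
  have v2: "v2 = sqrt (1 - (scale \<alpha> t2)\<^sup>2 / (scale \<alpha> \<tau>1)\<^sup>2)"
    using assms(4) by (simp add: v2_def kin_vel_def)
  have f1: "f_inv \<alpha> v1 = \<alpha> * \<tau>0 powr (\<alpha> - 1) * c1"
  proof -
    have "f_inv \<alpha> v1 = \<alpha> / (\<alpha> - 1) * (GG b ((\<tau>1 / \<tau>0) powr (2 * \<alpha>)) - C)"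
      unfolding v1 using finv_eq[OF a tau1(1) less_imp_le[OF tau1(2)]] by (simp add: b_def C_def)
    also have "\<dots> = \<alpha> * \<tau>0 powr (\<alpha> - 1) * c1" unfolding k1 using am1 by simp
    finally show ?thesis .
  qed
  have f2: "f_inv \<alpha> v2 = \<alpha> * \<tau>1 powr (\<alpha> - 1) * (c2 - c1)"
  proof -
    have "f_inv \<alpha> v2 = \<alpha> / (\<alpha> - 1) * (GG b ((t2 / \<tau>1) powr (2 * \<alpha>)) - C)"
      unfolding v2 using finv_eq[OF a tt2(1) less_imp_le[OF tt2(2)]] by (simp add: b_def C_def)
    also have "\<dots> = \<alpha> * \<tau>1 powr (\<alpha> - 1) * (c2 - c1)" unfolding k2 using am1 by simp
    finally show ?thesis .
  qed
  have r: "(1 - v1\<^sup>2) powr b = (\<tau>1 / \<tau>0) powr (1 - \<alpha>)"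
  proof -
    define z where "z = (\<tau>1 / \<tau>0) powr \<alpha>"
    have z: "0 < z" "z \<le> 1" using tau1 a by (auto simp: z_def powr_le1)
    have "z^2 \<le> 1" using z by (simp add: power_le_one)
    then have "1 - v1\<^sup>2 = z^2" unfolding v1 w_eq[OF tau1(1) assms(5)] z_def[symmetric] by simp
    also have "z^2 = (\<tau>1 / \<tau>0) powr (2 * \<alpha>)" unfolding z_def by (rule pw2)
    finally have "(1 - v1\<^sup>2) powr b = (\<tau>1 / \<tau>0) powr (2 * \<alpha> * b)" by (simp add: powr_powr)
    also have "2 * \<alpha> * b = 1 - \<alpha>" using a by (simp add: b_def)
    finally show ?thesis .
  qed
  have pw: "(\<tau>1 / \<tau>0) powr (1 - \<alpha>) * \<tau>1 powr (\<alpha> - 1) = \<tau>0 powr (\<alpha> - 1)"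
  proof -
    have e1: "\<tau>1 powr (1 - \<alpha>) * \<tau>1 powr (\<alpha> - 1) = 1"
      using tau1 by (simp add: powr_add[symmetric])
    have e2: "\<tau>0 powr (\<alpha> - 1) * \<tau>0 powr (1 - \<alpha>) = 1"
      using assms(5) by (simp add: powr_add[symmetric])
    have "(\<tau>1 / \<tau>0) powr (1 - \<alpha>) * \<tau>1 powr (\<alpha> - 1)
          = (\<tau>1 powr (1 - \<alpha>) * \<tau>1 powr (\<alpha> - 1)) / \<tau>0 powr (1 - \<alpha>)"
      by (simp add: powr_divide)
    also have "\<dots> = 1 / \<tau>0 powr (1 - \<alpha>)" unfolding e1 ..
    also have "\<dots> = \<tau>0 powr (\<alpha> - 1)" using e2 assms(5) by (simp add: field_simps)
    finally show ?thesis .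
  qed
  define V where "V = f_inv \<alpha> v1 + (1 - v1\<^sup>2) powr b * f_inv \<alpha> v2"
  have V: "V = \<alpha> * \<tau>0 powr (\<alpha> - 1) * c2"
  proof -
    have "V = \<alpha> * \<tau>0 powr (\<alpha> - 1) * c1 + \<alpha> * ((\<tau>1 / \<tau>0) powr (1 - \<alpha>) * \<tau>1 powr (\<alpha> - 1)) * (c2 - c1)"
      unfolding V_def f1 f2 r by (simp add: mult_ac)
    also have "\<dots> = \<alpha> * \<tau>0 powr (\<alpha> - 1) * c2" unfolding pw by (simp add: algebra_simps)
    finally show ?thesis .
  qed
  define z3 where "z3 = (t3 / \<tau>0) powr \<alpha>"
  have z3: "z3 \<in> {0<..<1}"
    using tt3 a powr_less_mono2[of \<alpha> "t3 / \<tau>0" 1] by (auto simp: z3_def)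
  have arg: "C_const \<alpha> + (\<alpha> - 1) / \<alpha> * V = F_fun \<alpha> z3"
  proof -
    have "C_const \<alpha> + (\<alpha> - 1) / \<alpha> * V = GG b ((t3 / \<tau>0) powr (2 * \<alpha>))"
    proof -
      have "(\<alpha> - 1) / \<alpha> * V = (\<alpha> - 1) * \<tau>0 powr (\<alpha> - 1) * c2" unfolding V using a by simp
      then show ?thesis using k3 unfolding C_def by linarith
    qed
    also have "(t3 / \<tau>0) powr (2 * \<alpha>) = z3^2" unfolding z3_def by (rule pw2[symmetric])
    finally show ?thesis using Ffun_GG[OF a] z3 by (simp add: b_def)
  qed
  have G: "G_fun \<alpha> V = t3 / \<tau>0"
  proof -
    have "G_fun \<alpha> V = z3 powr (1 / \<alpha>)"
      unfolding G_fun_def arg using inv_into_f_f[OF F_inj[OF a] z3] by simp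
    also have "\<dots> = (t3 / \<tau>0) powr (\<alpha> * (1 / \<alpha>))" unfolding z3_def by (rule powr_powr)
    also have "\<alpha> * (1 / \<alpha>) = 1" using a by simp
    finally show ?thesis using tt3 assms(5) by simp
  qed
  have "G_fun \<alpha> V powr (2 * \<alpha>) = z3^2" unfolding G z3_def by (rule pw2[symmetric])
  moreover have "kin_vel \<alpha> \<tau>0 0 t3 c2 = sqrt (1 - z3^2)"
    using assms(3,4) w_eq[OF tt3(1) assms(5), of \<alpha>] by (simp add: kin_vel_def z3_def)
  ultimately show ?thesis unfolding v1_def[symmetric] v2_def[symmetric] V_def[symmetric] b_def[symmetric]
    by simp
qed


end
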